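(* (General model.) For every $p\ge 2$ there exists an in-tree task graph $T$ such that every schedule $S$ of $T$ on $p$ processors satisfies $$\frac{C_{\max}(S)}{C^*_p(T)}\cdot\frac{M(S)}{M^*_p(T)}\ \ge\ p;$$ hence no algorithm is both an $\alpha(p)$-approximation for makespan and a $\beta(p)$-approximation for peak memory with $\alpha(p)\beta(p)<p$. Moreover this bound is tight: for every in-tree $T$ and every $p$, a single-processor schedule (without idle time) of minimum peak memory has peak memory $M^*_p(T)$ and makespan at most $p\,C^*_p(T)$.
   Context: Model (general). An in-tree task graph $T$ has nodes $\{1,\dots,n\}$ and a root; every non-root node $i$ has a parent, and $\mathrm{Children}(i)$ is the set of children of $i$. Each node $i$ has an arbitrary processing time $w_i\ge 0$, execution-file size $n_i\ge 0$ and output-file size $f_i\ge 0$. A schedule on $p$ identical processors assigns each node $i$ a processor and a start time $\sigma_i\ge 0$; node $i$ runs without preemption during $[\sigma_i,\sigma_i+w_i)$, a processor runs at most one node at a time, and a node may start only after all its children have completed. The makespan is $C_{\max}=\max_i(\sigma_i+w_i)$. Memory: the output file of $i$ (size $f_i$) occupies memory from the start of $i$ until the completion of the parent of $i$ (for the root, until the end of the schedule), and the execution file of $i$ (size $n_i$) occupies memory while $i$ runs. The memory used at time $t$ is the total size of files present at time $t$; the peak memory $M(S)$ is the supremum over $t$ of the memory used. $C^*_p(T)$ denotes the minimum makespan and $M^*_p(T)$ the minimum peak memory over all schedules of $T$ on $p$ processors. *)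

theory Defs
  imports Complex_Main
begin

text \<open>In-tree task graph: finite node set V (of naturals), root r, parent function par
  (only meaningful on V - {r}), processing times w, execution-file sizes nf,
  output-file sizes f.\<close>

definition parent_rel :: "nat set \<Rightarrow> nat \<Rightarrow> (nat \<Rightarrow> nat) \<Rightarrow> (nat \<times> nat) set" where
  "parent_rel V r par = {(x, par x) | x. x \<in> V \<and> x \<noteq> r}"

definition children :: "nat set \<Rightarrow> nat \<Rightarrow> (nat \<Rightarrow> nat) \<Rightarrow> nat \<Rightarrow> nat set" where
  "children V r par i = {j \<in> V. j \<noteq> r \<and> par j = i}"

definition in_tree ::
  "nat set \<Rightarrow> nat \<Rightarrow> (nat \<Rightarrow> nat) \<Rightarrow> (nat \<Rightarrow> real) \<Rightarrow> (nat \<Rightarrow> real) \<Rightarrow> (nat \<Rightarrow> real) \<Rightarrow> bool" where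
  "in_tree V r par w nf f \<longleftrightarrow>
     finite V \<and> r \<in> V \<and>
     (\<forall>i \<in> V - {r}. par i \<in> V) \<and>
     (\<forall>i \<in> V. (i, r) \<in> (parent_rel V r par)\<^sup>*) \<and>
     (\<forall>i \<in> V. w i \<ge> 0 \<and> nf i \<ge> 0 \<and> f i \<ge> 0)"

definition valid_sched ::
  "nat set \<Rightarrow> nat \<Rightarrow> (nat \<Rightarrow> nat) \<Rightarrow> (nat \<Rightarrow> real) \<Rightarrow> nat \<Rightarrow> (nat \<Rightarrow> nat) \<Rightarrow> (nat \<Rightarrow> real) \<Rightarrow> bool" where
  "valid_sched V r par w p proc \<sigma> \<longleftrightarrow>
     (\<forall>i \<in> V. proc i < p \<and> \<sigma> i \<ge> 0) \<and>
     (\<forall>i \<in> V. \<forall>j \<in> V. i \<noteq> j \<and> proc i = proc j \<longrightarrow>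
         {\<sigma> i..<\<sigma> i + w i} \<inter> {\<sigma> j..<\<sigma> j + w j} = {}) \<and>
     (\<forall>i \<in> V. \<forall>j \<in> children V r par i. \<sigma> j + w j \<le> \<sigma> i)"

definition Cmax :: "nat set \<Rightarrow> (nat \<Rightarrow> real) \<Rightarrow> (nat \<Rightarrow> real) \<Rightarrow> real" where
  "Cmax V w \<sigma> = Max ((\<lambda>i. \<sigma> i + w i) ` V)"

text \<open>End of the lifetime of the output file of i: completion of its parent, or the end
  of the schedule for the root.\<close>
definition out_end :: "nat set \<Rightarrow> nat \<Rightarrow> (nat \<Rightarrow> nat) \<Rightarrow> (nat \<Rightarrow> real) \<Rightarrow> (nat \<Rightarrow> real) \<Rightarrow> nat \<Rightarrow> real" where
  "out_end V r par w \<sigma> i = (if i = r then Cmax V w \<sigma> else \<sigma> (par i) + w (par i))"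

definition mem_at ::
  "nat set \<Rightarrow> nat \<Rightarrow> (nat \<Rightarrow> nat) \<Rightarrow> (nat \<Rightarrow> real) \<Rightarrow> (nat \<Rightarrow> real) \<Rightarrow> (nat \<Rightarrow> real)
     \<Rightarrow> (nat \<Rightarrow> real) \<Rightarrow> real \<Rightarrow> real" where
  "mem_at V r par w nf f \<sigma> t =
     (\<Sum>i \<in> V. (if \<sigma> i \<le> t \<and> t < out_end V r par w \<sigma> i then f i else 0)
             + (if \<sigma> i \<le> t \<and> t < \<sigma> i + w i then nf i else 0))"

definition peak_mem ::
  "nat set \<Rightarrow> nat \<Rightarrow> (nat \<Rightarrow> nat) \<Rightarrow> (nat \<Rightarrow> real) \<Rightarrow> (nat \<Rightarrow> real) \<Rightarrow> (nat \<Rightarrow> real)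
     \<Rightarrow> (nat \<Rightarrow> real) \<Rightarrow> real" where
  "peak_mem V r par w nf f \<sigma> = (SUP t. mem_at V r par w nf f \<sigma> t)"

definition Cstar :: "nat set \<Rightarrow> nat \<Rightarrow> (nat \<Rightarrow> nat) \<Rightarrow> (nat \<Rightarrow> real) \<Rightarrow> nat \<Rightarrow> real" where
  "Cstar V r par w p = Inf {Cmax V w \<sigma> | \<sigma>. \<exists>proc. valid_sched V r par w p proc \<sigma>}"

definition Mstar ::
  "nat set \<Rightarrow> nat \<Rightarrow> (nat \<Rightarrow> nat) \<Rightarrow> (nat \<Rightarrow> real) \<Rightarrow> (nat \<Rightarrow> real) \<Rightarrow> (nat \<Rightarrow> real) \<Rightarrow> nat \<Rightarrow> real" where
  "Mstar V r par w nf f p =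
     Inf {peak_mem V r par w nf f \<sigma> | \<sigma>. \<exists>proc. valid_sched V r par w p proc \<sigma>}"

definition no_idle :: "nat set \<Rightarrow> (nat \<Rightarrow> real) \<Rightarrow> (nat \<Rightarrow> real) \<Rightarrow> bool" where
  "no_idle V w \<sigma> \<longleftrightarrow>
     (\<forall>t. 0 \<le> t \<and> t < Cmax V w \<sigma> \<longrightarrow> (\<exists>i \<in> V. \<sigma> i \<le> t \<and> t < \<sigma> i + w i))"

end

theory Submission
  imports Defs "HOL-Analysis.Analysis"
begin

definition cmpct :: "nat set \<Rightarrow> (nat \<Rightarrow> real) \<Rightarrow> (nat \<Rightarrow> nat \<Rightarrow> bool) \<Rightarrow> nat \<Rightarrow> real" where
  "cmpct V w lt i = (if i \<in> V then (\<Sum>k\<in>{k\<in>V. lt k i}. w k) else 0)"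

definition sto :: "nat set \<Rightarrow> (nat \<Rightarrow> nat \<Rightarrow> bool) \<Rightarrow> bool" where
  "sto V lt \<longleftrightarrow> (\<forall>i\<in>V. \<not> lt i i) \<and> (\<forall>i\<in>V. \<forall>j\<in>V. \<forall>k\<in>V. lt i j \<longrightarrow> lt j k \<longrightarrow> lt i k)
     \<and> (\<forall>i\<in>V. \<forall>j\<in>V. i \<noteq> j \<longrightarrow> lt i j \<or> lt j i)"

definition lexo :: "(nat \<Rightarrow> real) \<Rightarrow> (nat \<Rightarrow> real) \<Rightarrow> (nat \<Rightarrow> nat) \<Rightarrow> nat \<Rightarrow> nat \<Rightarrow> bool" where
  "lexo s w d k i \<longleftrightarrow> s k + w k < s i + w i \<or> (s k + w k = s i + w i \<and> (s k < s i \<or> (s k = s i \<and>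
      (d i < d k \<or> (d i = d k \<and> k < i)))))"

lemma sto_lexo: "sto V (lexo s w d)"
  unfolding sto_def lexo_def
proof (intro conjI ballI impI)
  fix i j k
  assume "s i + w i < s j + w j \<or> s i + w i = s j + w j \<and> (s i < s j \<or> s i = s j \<and> (d j < d i \<or> d j = d i \<and> i < j))"
    "s j + w j < s k + w k \<or> s j + w j = s k + w k \<and> (s j < s k \<or> s j = s k \<and> (d k < d j \<or> d k = d j \<and> j < k))"
  then show "s i + w i < s k + w k \<or> s i + w i = s k + w k \<and> (s i < s k \<or> s i = s k \<and> (d k < d i \<or> d k = d i \<and> i < k))"
    by (elim disjE conjE) (linarith | simp)+
next
  fix i j :: nat assume "i \<noteq> j"
  then show "(s i + w i < s j + w j \<or> s i + w i = s j + w j \<and> (s i < s j \<or> s i = s j \<and> (d j < d i \<or> d j = d i \<and> i < j))) \<or>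
     s j + w j < s i + w i \<or> s j + w j = s i + w i \<and> (s j < s i \<or> s j = s i \<and> (d i < d j \<or> d i = d j \<and> j < i))"
    by (cases "s i + w i" "s j + w j" rule: linorder_cases; cases "s i" "s j" rule: linorder_cases;
        cases "d i" "d j" rule: linorder_cases) auto
qed auto

locale tr =
  fixes V r par w nf f
  assumes T: "in_tree V r par w nf f"
begin

lemma fin: "finite V" and rV: "r \<in> V" and parV: "\<And>i. i \<in> V \<Longrightarrow> i \<noteq> r \<Longrightarrow> par i \<in> V"
  and wnn: "\<And>i. i \<in> V \<Longrightarrow> w i \<ge> 0" and nfnn: "\<And>i. i \<in> V \<Longrightarrow> nf i \<ge> 0"
  and fnn: "\<And>i. i \<in> V \<Longrightarrow> f i \<ge> 0"
  using T unfolding in_tree_def by auto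

lemma reach: "i \<in> V \<Longrightarrow> \<exists>n. (par ^^ n) i = r"
proof -
  assume "i \<in> V"
  then have "(i, r) \<in> (parent_rel V r par)\<^sup>*" using T unfolding in_tree_def by auto
  then show ?thesis
  proof (induction rule: converse_rtrancl_induct)
    case base
    then show ?case by (rule exI[of _ 0]) simp
  next
    case (step y z)
    then obtain n where "(par ^^ n) z = r" by blast
    moreover have "z = par y" using step(1) unfolding parent_rel_def by auto
    ultimately show ?case by (intro exI[of _ "Suc n"]) (simp del: funpow.simps add: funpow_Suc_right)
  qed
qed

definition d :: "nat \<Rightarrow> nat" where "d i = (LEAST n. (par ^^ n) i = r)"

lemma d_child: assumes "j \<in> V" "j \<noteq> r" shows "d (par j) < d j"
proof -
  obtain n where n: "(par ^^ n) j = r" using reach assms by blast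
  have dj: "(par ^^ d j) j = r" unfolding d_def by (rule LeastI[of _ n]) (rule n)
  have "d j \<noteq> 0" using dj assms by (cases "d j") auto
  then obtain m where m: "d j = Suc m" by (cases "d j") auto
  have "(par ^^ m) (par j) = r" using dj m by (simp del: funpow.simps add: funpow_Suc_right)
  then have "d (par j) \<le> m" unfolding d_def by (rule Least_le)
  then show ?thesis using m by simp
qed

lemma children_iff: "j \<in> children V r par i \<longleftrightarrow> j \<in> V \<and> j \<noteq> r \<and> par j = i"
  unfolding children_def by auto


lemma sto_min: assumes "sto V lt" "finite X" "X \<noteq> {}" "X \<subseteq> V"
  shows "\<exists>m\<in>X. \<forall>x\<in>X. \<not> lt x m"
  using assms(2,3,4)
proof (induction X rule: finite_ne_induct)
  case (singleton x)
  then show ?case using assms(1) unfolding sto_def by auto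
next
  case (insert x F)
  then obtain m where m: "m \<in> F" "\<forall>y\<in>F. \<not> lt y m" by auto
  show ?case
  proof (cases "lt x m")
    case True
    then show ?thesis using m insert.prems assms(1) unfolding sto_def
      by (metis insert_iff insert_subset subsetD)
  next
    case False
    then show ?thesis using m by auto
  qed
qed

lemma sto_irr: "sto V lt \<Longrightarrow> i \<in> V \<Longrightarrow> \<not> lt i i" unfolding sto_def by auto
lemma sto_trans: "sto V lt \<Longrightarrow> i \<in> V \<Longrightarrow> j \<in> V \<Longrightarrow> k \<in> V \<Longrightarrow> lt i j \<Longrightarrow> lt j k \<Longrightarrow> lt i k"
  unfolding sto_def by blast
lemma sto_tot: "sto V lt \<Longrightarrow> i \<in> V \<Longrightarrow> j \<in> V \<Longrightarrow> i \<noteq> j \<Longrightarrow> \<not> lt i j \<Longrightarrow> lt j i"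
  unfolding sto_def by blast

lemma sto_flip: "sto V lt \<Longrightarrow> sto V (\<lambda>a b. lt b a)"
  unfolding sto_def by metis

lemma sto_max: assumes "sto V lt" "finite X" "X \<noteq> {}" "X \<subseteq> V"
  shows "\<exists>m\<in>X. \<forall>x\<in>X. \<not> lt m x"
  using sto_min[OF sto_flip[OF assms(1)] assms(2-4)] by auto

lemma comp_nn: "cmpct V w lt i \<ge> 0"
  unfolding cmpct_def using wnn by (auto intro: sum_nonneg)

lemma comp_lt: assumes "sto V lt" "k \<in> V" "i \<in> V" "lt k i"
  shows "cmpct V w lt k + w k \<le> cmpct V w lt i"
proof -
  have sub: "insert k {m\<in>V. lt m k} \<subseteq> {m\<in>V. lt m i}"
    using assms unfolding sto_def by blast
  have nk: "k \<notin> {m\<in>V. lt m k}" using assms unfolding sto_def by auto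
  have "cmpct V w lt k + w k = (\<Sum>m\<in>insert k {m\<in>V. lt m k}. w m)"
    using assms nk fin by (simp add: cmpct_def)
  also have "\<dots> \<le> (\<Sum>m\<in>{m\<in>V. lt m i}. w m)"
    by (rule sum_mono2) (use fin sub wnn in auto)
  finally show ?thesis using assms by (simp add: cmpct_def)
qed

lemma comp_le_W: assumes "sto V lt" "i \<in> V" shows "cmpct V w lt i + w i \<le> sum w V"
proof -
  define X where "X = {m\<in>V. lt m i}"
  have ni: "i \<notin> X" using sto_irr[OF assms] unfolding X_def by auto
  have c: "cmpct V w lt i = sum w X" using assms(2) unfolding X_def cmpct_def by simp
  have e: "sum w (insert i X) = w i + sum w X"
    by (rule sum.insert) (use fin ni in \<open>auto simp: X_def\<close>)
  have "sum w (insert i X) \<le> sum w V"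
    by (rule sum_mono2) (use fin assms wnn in \<open>auto simp: X_def\<close>)
  then show ?thesis using c e by linarith
qed

lemma Cmax_comp_le: "sto V lt \<Longrightarrow> Cmax V w (cmpct V w lt) \<le> sum w V"
  unfolding Cmax_def using fin rV comp_le_W by (subst Max_le_iff) auto
lemma comp_valid: assumes "sto V lt" "\<And>j. j \<in> V \<Longrightarrow> j \<noteq> r \<Longrightarrow> lt j (par j)"
  shows "valid_sched V r par w 1 (\<lambda>_. 0) (cmpct V w lt)"
  unfolding valid_sched_def
proof (intro conjI ballI impI allI)
  fix i assume "i \<in> V" then show "(0::nat) < 1" "0 \<le> cmpct V w lt i" using comp_nn by auto
next
  fix i j assume ij: "i \<in> V" "j \<in> V" "i \<noteq> j \<and> (0::nat) = 0"
  then have "lt i j \<or> lt j i" using assms(1) unfolding sto_def by auto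
  then show "{cmpct V w lt i..<cmpct V w lt i + w i} \<inter> {cmpct V w lt j..<cmpct V w lt j + w j} = {}"
  proof
    assume "lt i j" then have "cmpct V w lt i + w i \<le> cmpct V w lt j" using comp_lt assms ij by auto
    then show ?thesis by auto
  next
    assume "lt j i" then have "cmpct V w lt j + w j \<le> cmpct V w lt i" using comp_lt assms ij by auto
    then show ?thesis by auto
  qed
next
  fix i j assume "i \<in> V" "j \<in> children V r par i"
  then have j: "j \<in> V" "j \<noteq> r" "par j = i" by (auto simp: children_iff)
  have "lt j i" using assms(2)[OF j(1,2)] j(3) by simp
  then show "cmpct V w lt j + w j \<le> cmpct V w lt i" by (rule comp_lt[OF assms(1) j(1) \<open>i \<in> V\<close>])
qed

lemma comp_noidle: assumes "sto V lt"
  shows "no_idle V w (cmpct V w lt)"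
  unfolding no_idle_def
proof (intro allI impI)
  fix t assume t: "0 \<le> t \<and> t < Cmax V w (cmpct V w lt)"
  let ?S = "cmpct V w lt"
  define A where "A = {k\<in>V. ?S k \<le> t}"
  have Vne: "V \<noteq> {}" using rV by auto
  obtain m where m: "m \<in> V" "\<forall>x\<in>V. \<not> lt x m" using sto_min[OF assms fin Vne subset_refl] by (elim bexE)
  have "{k\<in>V. lt k m} = {}" using m by auto
  then have "?S m = 0" using m by (simp only: cmpct_def if_True sum.empty)
  then have "m \<in> A" using t m unfolding A_def by auto
  have Afin: "finite A" "A \<subseteq> V" using fin unfolding A_def by auto
  have Ane: "A \<noteq> {}" using \<open>m \<in> A\<close> by auto
  obtain i where i: "i \<in> A" "\<forall>x\<in>A. \<not> lt i x"
    using sto_max[OF assms Afin(1) Ane Afin(2)] by (elim bexE)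
  have iV: "i \<in> V" "?S i \<le> t" using i unfolding A_def by auto
  have "t < ?S i + w i"
  proof (rule ccontr)
    assume c: "\<not> t < ?S i + w i"
    define B where "B = {k\<in>V. lt i k}"
    show False
    proof (cases "B = {}")
      case True
      then have "{k\<in>V. lt k i} = V - {i}" using sto_irr[OF assms] sto_tot[OF assms] iV unfolding B_def by blast
      then have "?S i + w i = sum w V" using iV fin by (simp add: cmpct_def sum_diff1)
      then show False using c t Cmax_comp_le[OF assms] by linarith
    next
      case False
      have Bfin: "finite B" "B \<subseteq> V" using fin unfolding B_def by auto
      obtain k where k: "k \<in> B" "\<forall>x\<in>B. \<not> lt x k"
        using sto_min[OF assms Bfin(1) False Bfin(2)] by (elim bexE)
      have kV: "k \<in> V" "lt i k" using k unfolding B_def by auto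
      have eq: "{m\<in>V. lt m k} = insert i {m\<in>V. lt m i}"
      proof
        show "insert i {m\<in>V. lt m i} \<subseteq> {m\<in>V. lt m k}"
          using kV iV sto_trans[OF assms] by blast
        show "{m\<in>V. lt m k} \<subseteq> insert i {m\<in>V. lt m i}"
        proof
          fix x assume x: "x \<in> {m\<in>V. lt m k}"
          show "x \<in> insert i {m\<in>V. lt m i}"
          proof (cases "x = i")
            case False
            have "\<not> lt i x" using k x unfolding B_def by auto
            then show ?thesis using False x iV sto_tot[OF assms, of i x] by auto
          qed simp
        qed
      qed
      have ni: "i \<notin> {m\<in>V. lt m i}" using sto_irr[OF assms iV(1)] by auto
      have "?S k = ?S i + w i" using kV iV fin ni by (simp add: cmpct_def eq)
      then have "k \<in> A" using c kV unfolding A_def by auto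
      then show False using i kV by auto
    qed
  qed
  then show "\<exists>i\<in>V. ?S i \<le> t \<and> t < ?S i + w i" using iV by auto
qed


lemma lexo0_child: "j \<in> V \<Longrightarrow> j \<noteq> r \<Longrightarrow> lexo (\<lambda>_. 0) (\<lambda>_. 0) d j (par j)"
  using d_child unfolding lexo_def by auto

lemma lexo_child: assumes "valid_sched V r par w p proc \<sigma>" "j \<in> V" "j \<noteq> r"
  shows "lexo \<sigma> w d j (par j)"
proof -
  have pj: "par j \<in> V" using parV assms by auto
  have "j \<in> children V r par (par j)" using assms by (auto simp: children_iff)
  then have le: "\<sigma> j + w j \<le> \<sigma> (par j)" using assms(1) pj unfolding valid_sched_def by blast
  have "w j \<ge> 0" "w (par j) \<ge> 0" using wnn assms pj by auto
  then show ?thesis using le d_child[OF assms(2,3)] unfolding lexo_def by auto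
qed

lemma mem_nn: "mem_at V r par w nf f s t \<ge> 0"
  unfolding mem_at_def using fnn nfnn by (intro sum_nonneg) auto

lemma mem_bdd: "mem_at V r par w nf f s t \<le> (\<Sum>i\<in>V. f i + nf i)"
  unfolding mem_at_def using fnn nfnn by (intro sum_mono) auto

lemma peak_ge: "mem_at V r par w nf f s t \<le> peak_mem V r par w nf f s"
  unfolding peak_mem_def
  by (rule cSUP_upper) (auto intro!: bdd_aboveI[where M="\<Sum>i\<in>V. f i + nf i"] mem_bdd)

lemma peak_le: "(\<And>t. mem_at V r par w nf f s t \<le> B) \<Longrightarrow> peak_mem V r par w nf f s \<le> B"
  unfolding peak_mem_def by (rule cSUP_least) auto

lemma peak_nn: "peak_mem V r par w nf f s \<ge> 0"
  using peak_ge[of s 0] mem_nn[of s 0] by linarith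

lemma Cmax_ge: "i \<in> V \<Longrightarrow> s i + w i \<le> Cmax V w s"
  unfolding Cmax_def using fin by auto

lemma mem_comp: assumes v: "valid_sched V r par w p proc \<sigma>"
  shows "peak_mem V r par w nf f (cmpct V w (lexo \<sigma> w d)) \<le> peak_mem V r par w nf f \<sigma>"
proof (rule peak_le)
  fix t
  let ?lt = "lexo \<sigma> w d"
  let ?S = "cmpct V w ?lt"
  let ?C = "\<lambda>k. \<sigma> k + w k"
  have st: "sto V ?lt" by (rule sto_lexo)
  show "mem_at V r par w nf f ?S t \<le> peak_mem V r par w nf f \<sigma>"
  proof (cases "0 \<le> t \<and> t < Cmax V w ?S")
    case False
    have "mem_at V r par w nf f ?S t = 0"
      unfolding mem_at_def
    proof (rule sum.neutral, rule ballI)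
      fix k assume k: "k \<in> V"
      have a: "?S k \<ge> 0" by (rule comp_nn)
      have b: "?S k + w k \<le> Cmax V w ?S" using Cmax_ge[OF k] .
      have c: "out_end V r par w ?S k \<le> Cmax V w ?S"
        using Cmax_ge[of "par k" ?S] parV[OF k] unfolding out_end_def by auto
      show "(if ?S k \<le> t \<and> t < out_end V r par w ?S k then f k else 0) +
          (if ?S k \<le> t \<and> t < ?S k + w k then nf k else 0) = 0"
        using False a b c by auto
    qed
    then show ?thesis using peak_nn[of \<sigma>] by simp
  next
    case True
    obtain i where i: "i \<in> V" "?S i \<le> t" "t < ?S i + w i"
      using comp_noidle[OF st] True unfolding no_idle_def by blast
    have wi: "w i > 0" using i by linarith
    define K where "K = {k\<in>V. ?lt k i \<or> k = i}"
    define \<tau> where "\<tau> = Max (\<sigma> ` K)"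
    have Kfin: "finite K" using fin unfolding K_def by auto
    have iK: "i \<in> K" using i unfolding K_def by auto
    have tau_ge: "\<And>k. k \<in> K \<Longrightarrow> \<sigma> k \<le> \<tau>" unfolding \<tau>_def using Kfin by auto
    have K_lt: "\<And>k. k \<in> K \<Longrightarrow> \<sigma> k < ?C i"
    proof -
      fix k assume "k \<in> K"
      then have k: "k \<in> V" "?lt k i \<or> k = i" unfolding K_def by auto
      show "\<sigma> k < ?C i"
      proof (cases "k = i")
        case True then show ?thesis using wi by simp
      next
        case False
        then have "?lt k i" using k by simp
        then show ?thesis using wnn[OF k(1)] wi unfolding lexo_def by auto
      qed
    qed
    have tau_lt: "\<tau> < ?C i"
    proof -
      have "\<tau> \<in> \<sigma> ` K" unfolding \<tau>_def using Kfin iK by (intro Max_in) auto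
      then show ?thesis using K_lt by auto
    qed
    have tau_i: "\<sigma> i \<le> \<tau>" using tau_ge iK by auto
    have F1: "\<And>k. k \<in> V \<Longrightarrow> ?S k \<le> t \<Longrightarrow> k \<in> K"
    proof -
      fix k assume k: "k \<in> V" "?S k \<le> t"
      show "k \<in> K"
      proof (rule ccontr)
        assume "k \<notin> K"
        then have "?lt i k" using sto_tot[OF st k(1) i(1)] k(1) unfolding K_def by auto
        then have "?S i + w i \<le> ?S k" using comp_lt[OF st i(1) k(1)] by simp
        then show False using i k by linarith
      qed
    qed
    have "mem_at V r par w nf f ?S t \<le> mem_at V r par w nf f \<sigma> \<tau>"
      unfolding mem_at_def
    proof (rule sum_mono)
      fix k assume k: "k \<in> V"
      have A: "(if ?S k \<le> t \<and> t < out_end V r par w ?S k then f k else 0)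
          \<le> (if \<sigma> k \<le> \<tau> \<and> \<tau> < out_end V r par w \<sigma> k then f k else 0)"
      proof (cases "?S k \<le> t \<and> t < out_end V r par w ?S k")
        case True
        then have kK: "k \<in> K" using F1 k by auto
        have "\<tau> < out_end V r par w \<sigma> k"
        proof (cases "k = r")
          case True
          then show ?thesis using tau_lt Cmax_ge[OF i(1), of \<sigma>] unfolding out_end_def by auto
        next
          case False
          have q: "par k \<in> V" using parV[OF k False] .
          have tq: "t < ?S (par k) + w (par k)" using True False unfolding out_end_def by auto
          have "?lt i (par k) \<or> par k = i"
          proof (rule ccontr)
            assume "\<not> (?lt i (par k) \<or> par k = i)"
            then have "?lt (par k) i" using sto_tot[OF st i(1) q] by auto
            then have "?S (par k) + w (par k) \<le> ?S i" using comp_lt[OF st q i(1)] by simp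
            then show False using tq i by linarith
          qed
          then have "?C i \<le> ?C (par k)" unfolding lexo_def by auto
          then show ?thesis using tau_lt False unfolding out_end_def by auto
        qed
        then show ?thesis using tau_ge[OF kK] fnn[OF k] by auto
      qed (use fnn[OF k] in auto)
      have B: "(if ?S k \<le> t \<and> t < ?S k + w k then nf k else 0)
          \<le> (if \<sigma> k \<le> \<tau> \<and> \<tau> < \<sigma> k + w k then nf k else 0)"
      proof (cases "?S k \<le> t \<and> t < ?S k + w k")
        case True
        have "k = i"
        proof (rule ccontr)
          assume ne: "k \<noteq> i"
          then have "?lt k i" using F1[OF k] True unfolding K_def by auto
          then have "?S k + w k \<le> ?S i" using comp_lt[OF st k i(1)] by simp
          then show False using True i by linarith
        qed
        then show ?thesis using tau_i tau_lt nfnn[OF k] True by auto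
      qed (use nfnn[OF k] in auto)
      show "(if ?S k \<le> t \<and> t < out_end V r par w ?S k then f k else 0) +
          (if ?S k \<le> t \<and> t < ?S k + w k then nf k else 0)
          \<le> (if \<sigma> k \<le> \<tau> \<and> \<tau> < out_end V r par w \<sigma> k then f k else 0) +
          (if \<sigma> k \<le> \<tau> \<and> \<tau> < \<sigma> k + w k then nf k else 0)"
        using A B by linarith
    qed
    then show ?thesis using peak_ge[of \<sigma> \<tau>] by linarith
  qed
qed

lemma Ico_fm: "{a..<b::real} \<in> fmeasurable lborel"
  apply (rule fmeasurableI2[of "{a..b}"])
  using fmeasurable_cbox[of a b] apply (simp add: cbox_interval)
  apply auto
  done

lemma Cmax_nn: assumes "\<And>i. i \<in> V \<Longrightarrow> s i \<ge> 0" shows "Cmax V w s \<ge> 0"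
  using Cmax_ge[OF rV, of s] assms[OF rV] wnn[OF rV] by linarith

lemma noidle_Cmax: assumes "no_idle V w s" "\<And>i. i \<in> V \<Longrightarrow> s i \<ge> 0"
  shows "Cmax V w s \<le> sum w V"
proof -
  let ?C = "Cmax V w s"
  have sub: "{0..<?C} \<subseteq> (\<Union>i\<in>V. {s i..<s i + w i})"
    using assms(1) unfolding no_idle_def by auto
  have "?C = measure lborel {0..<?C}" using Cmax_nn[OF assms(2)] by simp
  also have "\<dots> \<le> measure lborel (\<Union>i\<in>V. {s i..<s i + w i})"
    by (rule measure_mono_fmeasurable[OF sub]) (intro fmeasurableD[OF Ico_fm] fmeasurable.finite_UN fin Ico_fm)+
  also have "\<dots> \<le> (\<Sum>i\<in>V. measure lborel {s i..<s i + w i})"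
    by (rule measure_UNION_le) (auto simp: fin)
  also have "\<dots> = sum w V"
    by (rule sum.cong) (auto simp: wnn)
  finally show ?thesis .
qed

lemma valid_Cmax: assumes v: "valid_sched V r par w p proc s"
  shows "sum w V \<le> real p * Cmax V w s"
proof -
  let ?C = "Cmax V w s"
  have snn: "\<And>i. i \<in> V \<Longrightarrow> s i \<ge> 0" and pr: "\<And>i. i \<in> V \<Longrightarrow> proc i < p"
    and dis: "\<And>i j. i \<in> V \<Longrightarrow> j \<in> V \<Longrightarrow> i \<noteq> j \<Longrightarrow> proc i = proc j \<Longrightarrow>
          {s i..<s i + w i} \<inter> {s j..<s j + w j} = {}"
    using v unfolding valid_sched_def by auto
  have Cnn: "?C \<ge> 0" using Cmax_nn[OF snn] .
  have q: "(\<Sum>i\<in>{i\<in>V. proc i = q}. w i) \<le> ?C" for q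
  proof -
    let ?Q = "{i\<in>V. proc i = q}"
    have "(\<Sum>i\<in>?Q. w i) = (\<Sum>i\<in>?Q. measure lborel {s i..<s i + w i})"
      by (rule sum.cong) (auto simp: wnn)
    also have "\<dots> = measure lborel (\<Union>i\<in>?Q. {s i..<s i + w i})"
    proof (rule measure_finite_Union[symmetric])
      show "finite ?Q" using fin by auto
      show "(\<lambda>i. {s i..<s i + w i}) ` ?Q \<subseteq> sets lborel" by auto
      show "disjoint_family_on (\<lambda>i. {s i..<s i + w i}) ?Q"
        unfolding disjoint_family_on_def using dis by blast
      fix i show "emeasure lborel {s i..<s i + w i} \<noteq> \<infinity>"
        using Ico_fm[of "s i" "s i + w i"] unfolding fmeasurable_def by auto
    qed
    also have "\<dots> \<le> measure lborel {0..<?C}"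
    proof (rule measure_mono_fmeasurable)
      show "(\<Union>i\<in>?Q. {s i..<s i + w i}) \<subseteq> {0..<?C}"
        using snn Cmax_ge[of _ s] by fastforce
    next
      show "(\<Union>i\<in>?Q. {s i..<s i + w i}) \<in> sets lborel"
        by (intro fmeasurableD fmeasurable.finite_UN Ico_fm) (use fin in auto)
    qed (rule Ico_fm)
    also have "\<dots> = ?C" using Cnn by simp
    finally show ?thesis .
  qed
  have "sum w V = (\<Sum>q\<in>{..<p}. \<Sum>i\<in>{i\<in>V. proc i = q}. w i)"
    by (rule sum.group[symmetric]) (use fin pr in auto)
  also have "\<dots> \<le> (\<Sum>q\<in>{..<p}. ?C)" by (rule sum_mono) (rule q)
  also have "\<dots> = real p * ?C" by simp
  finally show ?thesis .
qed

definition Cand where "Cand = (\<lambda>B i. if i \<in> V then sum w (B i) else 0) ` (PiE V (\<lambda>_. Pow V))"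

lemma Cand_fin: "finite Cand"
  unfolding Cand_def using fin by (intro finite_imageI finite_PiE) auto

lemma comp_Cand: "cmpct V w lt \<in> Cand"
  unfolding Cand_def
proof (rule image_eqI[where x="restrict (\<lambda>i. {k\<in>V. lt k i}) V"])
  show "cmpct V w lt = (\<lambda>i. if i \<in> V then sum w (restrict (\<lambda>i. {k\<in>V. lt k i}) V i) else 0)"
    by (rule ext) (simp add: cmpct_def)
  show "restrict (\<lambda>i. {k\<in>V. lt k i}) V \<in> (PiE V (\<lambda>_. Pow V))" by auto
qed

definition G where "G = {s\<in>Cand. valid_sched V r par w 1 (\<lambda>_. 0) s \<and> no_idle V w s}"

lemma comp_G: assumes "sto V lt" "\<And>j. j \<in> V \<Longrightarrow> j \<noteq> r \<Longrightarrow> lt j (par j)"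
  shows "cmpct V w lt \<in> G"
  unfolding G_def using comp_Cand comp_valid[OF assms] comp_noidle[OF assms(1)] by auto

lemma G_fin: "finite G" using Cand_fin unfolding G_def by auto

lemma s0_G: "cmpct V w (lexo (\<lambda>_. 0) (\<lambda>_. 0) d) \<in> G"
  by (rule comp_G[OF sto_lexo lexo0_child])

lemma G_ne: "G \<noteq> {}" using s0_G by auto

definition mm where "mm = Min ((peak_mem V r par w nf f) ` G)"

lemma valid_mono: "valid_sched V r par w 1 proc s \<Longrightarrow> 1 \<le> p \<Longrightarrow> valid_sched V r par w p proc s"
  unfolding valid_sched_def by auto

lemma mm_in: "\<exists>s\<in>G. peak_mem V r par w nf f s = mm"
proof -
  have "mm \<in> (peak_mem V r par w nf f) ` G" unfolding mm_def using G_fin G_ne by (intro Min_in) auto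
  then show ?thesis by auto
qed

lemma Mstar_eq: assumes "1 \<le> p" shows "Mstar V r par w nf f p = mm"
  unfolding Mstar_def
proof (rule cInf_eq_minimum)
  obtain s where s: "s \<in> G" "peak_mem V r par w nf f s = mm" using mm_in by blast
  then have "valid_sched V r par w p (\<lambda>_. 0) s" using valid_mono assms unfolding G_def by auto
  then show "mm \<in> {peak_mem V r par w nf f \<sigma> |\<sigma>. \<exists>proc. valid_sched V r par w p proc \<sigma>}"
    using s by (intro CollectI exI[of _ s]) auto
next
  fix x assume "x \<in> {peak_mem V r par w nf f \<sigma> |\<sigma>. \<exists>proc. valid_sched V r par w p proc \<sigma>}"
  then obtain \<sigma> proc where x: "x = peak_mem V r par w nf f \<sigma>" and v: "valid_sched V r par w p proc \<sigma>"
    by auto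
  have g: "cmpct V w (lexo \<sigma> w d) \<in> G" by (rule comp_G[OF sto_lexo lexo_child[OF v]])
  have "mm \<le> peak_mem V r par w nf f (cmpct V w (lexo \<sigma> w d))"
    unfolding mm_def using G_fin g by auto
  also have "\<dots> \<le> x" using mem_comp[OF v] x by simp
  finally show "mm \<le> x" .
qed

lemma Cstar_ge: assumes "1 \<le> p" shows "sum w V \<le> real p * Cstar V r par w p"
proof -
  have pp: "real p > 0" using assms by simp
  have "sum w V / real p \<le> Cstar V r par w p"
    unfolding Cstar_def
  proof (rule cInf_greatest)
    have "valid_sched V r par w p (\<lambda>_. 0) (cmpct V w (lexo (\<lambda>_. 0) (\<lambda>_. 0) d))"
      using s0_G valid_mono assms unfolding G_def by auto
    then show "{Cmax V w \<sigma> |\<sigma>. \<exists>proc. valid_sched V r par w p proc \<sigma>} \<noteq> {}" by auto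
  next
    fix x assume "x \<in> {Cmax V w \<sigma> |\<sigma>. \<exists>proc. valid_sched V r par w p proc \<sigma>}"
    then obtain \<sigma> proc where x: "x = Cmax V w \<sigma>" and v: "valid_sched V r par w p proc \<sigma>" by auto
    show "sum w V / real p \<le> x" using valid_Cmax[OF v] x pp by (simp add: divide_le_eq mult.commute)
  qed
  then show ?thesis using pp by (simp add: divide_le_eq mult.commute)
qed

lemma part2:
  assumes "1 \<le> p"
  shows "(\<exists>proc \<sigma>. valid_sched V r par w 1 proc \<sigma> \<and> no_idle V w \<sigma> \<and>
                peak_mem V r par w nf f \<sigma> = Mstar V r par w nf f 1) \<and>
           (\<forall>proc \<sigma>. valid_sched V r par w 1 proc \<sigma> \<and> no_idle V w \<sigma> \<and>
                peak_mem V r par w nf f \<sigma> = Mstar V r par w nf f 1 \<longrightarrow>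
                peak_mem V r par w nf f \<sigma> = Mstar V r par w nf f p \<and>
                Cmax V w \<sigma> \<le> real p * Cstar V r par w p)"
proof (intro conjI allI impI)
  obtain s where s: "s \<in> G" "peak_mem V r par w nf f s = mm" using mm_in by blast
  then show "\<exists>proc \<sigma>. valid_sched V r par w 1 proc \<sigma> \<and> no_idle V w \<sigma> \<and>
                peak_mem V r par w nf f \<sigma> = Mstar V r par w nf f 1"
    using Mstar_eq[of 1] unfolding G_def by auto
next
  fix proc \<sigma> assume a: "valid_sched V r par w 1 proc \<sigma> \<and> no_idle V w \<sigma> \<and>
                peak_mem V r par w nf f \<sigma> = Mstar V r par w nf f 1"
  then show "peak_mem V r par w nf f \<sigma> = Mstar V r par w nf f p"
    using Mstar_eq[of 1] Mstar_eq[OF assms] by simp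
  have snn: "\<And>i. i \<in> V \<Longrightarrow> \<sigma> i \<ge> 0" using a unfolding valid_sched_def by auto
  have "Cmax V w \<sigma> \<le> sum w V" using noidle_Cmax[OF _ snn] a by auto
  then show "Cmax V w \<sigma> \<le> real p * Cstar V r par w p" using Cstar_ge[OF assms] by linarith
qed

end

definition wt :: "nat \<Rightarrow> real" where "wt i = (if i = 0 then 0 else 1)"

lemma T1: "in_tree {0..p} 0 (\<lambda>_. 0) wt wt (\<lambda>_. 0)"
  unfolding in_tree_def
proof (intro conjI ballI)
  fix i assume "i \<in> {0..p}"
  show "(i, 0) \<in> (parent_rel {0..p} 0 (\<lambda>_. 0))\<^sup>*"
  proof (cases "i = 0")
    case False
    then have "(i, 0) \<in> parent_rel {0..p} 0 (\<lambda>_. 0)" using \<open>i \<in> {0..p}\<close> unfolding parent_rel_def by auto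
    then show ?thesis by auto
  qed simp
qed (auto simp: wt_def)

lemma part1: assumes p: "p \<ge> 2"
  shows "\<exists>V r par w nf f. in_tree V r par w nf f \<and>
              (\<forall>proc \<sigma>. valid_sched V r par w p proc \<sigma> \<longrightarrow>
                 (Cmax V w \<sigma> / Cstar V r par w p) *
                 (peak_mem V r par w nf f \<sigma> / Mstar V r par w nf f p) \<ge> real p)"
proof (intro exI conjI allI impI)
  let ?V = "{0..p}" and ?par = "\<lambda>_::nat. 0::nat" and ?f = "\<lambda>_::nat. 0::real"
  show T: "in_tree ?V 0 ?par wt wt ?f" by (rule T1)
  interpret tr ?V 0 ?par wt wt ?f by (unfold_locales) (rule T)
  have oneV: "1 \<in> ?V" using p by auto
  have ch: "\<And>i j. j \<in> children ?V 0 ?par i \<longleftrightarrow> j \<in> ?V \<and> j \<noteq> 0 \<and> i = 0"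
    unfolding children_def by auto
  have Cge: "Cmax ?V wt s \<ge> 1" if v: "valid_sched ?V 0 ?par wt p proc s" for proc s
  proof -
    have "s 1 \<ge> 0" using v oneV unfolding valid_sched_def by auto
    then show ?thesis using Cmax_ge[OF oneV, of s] by (simp add: wt_def)
  qed
  have Pge: "peak_mem ?V 0 ?par wt wt ?f s \<ge> 1" for s
  proof -
    have "1 \<le> (\<lambda>i. (if s i \<le> s 1 \<and> s 1 < out_end ?V 0 ?par wt s i then ?f i else 0)
          + (if s i \<le> s 1 \<and> s 1 < s i + wt i then wt i else 0)) 1"
      by (simp add: wt_def)
    also have "\<dots> \<le> mem_at ?V 0 ?par wt wt ?f s (s 1)"
      unfolding mem_at_def by (rule member_le_sum) (use oneV in \<open>auto simp: wt_def\<close>)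
    also have "\<dots> \<le> peak_mem ?V 0 ?par wt wt ?f s" by (rule peak_ge)
    finally show ?thesis .
  qed
  define sP where "sP = (\<lambda>i::nat. if i = 0 then 1 else (0::real))"
  have vP: "valid_sched ?V 0 ?par wt p (\<lambda>i. i - 1) sP"
    unfolding valid_sched_def sP_def using p by (auto simp: ch wt_def)
  have CP: "Cmax ?V wt sP \<le> 1"
    unfolding Cmax_def using fin by (subst Max_le_iff) (auto simp: sP_def wt_def)
  define sS where "sS = (\<lambda>i::nat. if i = 0 then real p else real i - 1)"
  have vS: "valid_sched ?V 0 ?par wt p (\<lambda>i. 0) sS"
    unfolding valid_sched_def sS_def using p by (auto simp: ch wt_def)
  have PS: "peak_mem ?V 0 ?par wt wt ?f sS \<le> 1"
  proof (rule peak_le)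
    fix t :: real
    define k where "k = nat \<lfloor>t\<rfloor> + 1"
    let ?g = "\<lambda>i. (if sS i \<le> t \<and> t < out_end ?V 0 ?par wt sS i then ?f i else 0)
          + (if sS i \<le> t \<and> t < sS i + wt i then wt i else 0)"
    have z: "?g i = 0" if "i \<in> ?V" "i \<noteq> k" for i
    proof (cases "i = 0")
      case False
      have "\<not> (real i - 1 \<le> t \<and> t < real i)"
      proof
        assume h: "real i - 1 \<le> t \<and> t < real i"
        then have "\<lfloor>t\<rfloor> = int i - 1" by (intro floor_unique) auto
        then show False using that False unfolding k_def by auto
      qed
      then show ?thesis using False by (auto simp: sS_def wt_def)
    qed (simp add: wt_def)
    have "mem_at ?V 0 ?par wt wt ?f sS t = (\<Sum>i\<in>?V \<inter> {k}. ?g i)"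
      unfolding mem_at_def by (rule sum.mono_neutral_right) (use z in auto)
    also have "\<dots> \<le> (\<Sum>i\<in>{k}. ?g i)"
      by (rule sum_mono2) (auto simp: wt_def)
    also have "\<dots> \<le> 1" by (simp add: wt_def)
    finally show "mem_at ?V 0 ?par wt wt ?f sS t \<le> 1" .
  qed
  have Cs: "0 < Cstar ?V 0 ?par wt p" "Cstar ?V 0 ?par wt p \<le> 1"
  proof -
    have ne: "{Cmax ?V wt \<sigma> |\<sigma>. \<exists>proc. valid_sched ?V 0 ?par wt p proc \<sigma>} \<noteq> {}" using vP by blast
    have "1 \<le> Cstar ?V 0 ?par wt p" unfolding Cstar_def by (rule cInf_greatest[OF ne]) (use Cge in auto)
    then show "0 < Cstar ?V 0 ?par wt p" by simp
    have "Cstar ?V 0 ?par wt p \<le> Cmax ?V wt sP" unfolding Cstar_def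
      by (rule cInf_lower) (use vP Cge in \<open>auto intro!: bdd_belowI[where m=1]\<close>)
    then show "Cstar ?V 0 ?par wt p \<le> 1" using CP by simp
  qed
  have Ms: "0 < Mstar ?V 0 ?par wt wt ?f p" "Mstar ?V 0 ?par wt wt ?f p \<le> 1"
  proof -
    have ne: "{peak_mem ?V 0 ?par wt wt ?f \<sigma> |\<sigma>. \<exists>proc. valid_sched ?V 0 ?par wt p proc \<sigma>} \<noteq> {}" using vS by blast
    have "1 \<le> Mstar ?V 0 ?par wt wt ?f p" unfolding Mstar_def by (rule cInf_greatest[OF ne]) (use Pge in auto)
    then show "0 < Mstar ?V 0 ?par wt wt ?f p" by simp
    have "Mstar ?V 0 ?par wt wt ?f p \<le> peak_mem ?V 0 ?par wt wt ?f sS" unfolding Mstar_def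
      by (rule cInf_lower) (use vS Pge in \<open>auto intro!: bdd_belowI[where m=1]\<close>)
    then show "Mstar ?V 0 ?par wt wt ?f p \<le> 1" using PS by simp
  qed
  fix proc \<sigma> assume v: "valid_sched ?V 0 ?par wt p proc \<sigma>"
  let ?C = "Cmax ?V wt \<sigma>" and ?P = "peak_mem ?V 0 ?par wt wt ?f \<sigma>"
  have snn: "\<And>i. i \<in> ?V \<Longrightarrow> \<sigma> i \<ge> 0" using v unfolding valid_sched_def by auto
  have Cnn: "?C \<ge> 0" using Cge[OF v] by simp
  have Pnn: "?P \<ge> 0" using Pge[of \<sigma>] by simp
  have grid: "real p \<le> ?C * ?P"
  proof -
    define L where "L = {1..p}"
    have Lfin: "finite L" and LV: "L \<subseteq> ?V" and Lne: "L \<noteq> {}" using p unfolding L_def by auto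
    define m where "m = Min (\<sigma> ` L)"
    have mle: "\<And>i. i \<in> L \<Longrightarrow> m \<le> \<sigma> i" unfolding m_def using Lfin by auto
    have mnn: "m \<ge> 0" unfolding m_def using Lfin Lne snn LV by (subst Min_ge_iff) auto
    define j where "j = (\<lambda>i. nat \<lfloor>?C - 1 - \<sigma> i\<rfloor>)"
    define N where "N = nat \<lfloor>?C - m\<rfloor>"
    have jN: "j i < N" if "i \<in> L" for i
    proof -
      have "\<sigma> i + 1 \<le> ?C" using Cmax_ge[of i \<sigma>] that LV by (auto simp: wt_def L_def)
      then have "\<lfloor>?C - 1 - \<sigma> i\<rfloor> + 1 \<le> \<lfloor>?C - m\<rfloor>" using mle[OF that] by linarith
      moreover have "\<lfloor>?C - 1 - \<sigma> i\<rfloor> \<ge> 0" using \<open>\<sigma> i + 1 \<le> ?C\<close> by simp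
      ultimately show ?thesis unfolding j_def N_def by linarith
    qed
    have NC: "real N \<le> ?C"
    proof -
      obtain i where "i \<in> L" using Lne by auto
      then have "\<sigma> i + 1 \<le> ?C" "m \<le> \<sigma> i" using Cmax_ge[of i \<sigma>] LV mle by (auto simp: wt_def L_def)
      then have "?C - m \<ge> 0" by linarith
      then have "real N \<le> ?C - m" unfolding N_def by linarith
      then show ?thesis using mnn by linarith
    qed
    have A: "real (card {i\<in>L. j i = q}) \<le> ?P" if "q < N" for q
    proof -
      let ?A = "{i\<in>L. j i = q}"
      let ?t = "?C - 1 - real q"
      let ?g = "\<lambda>i. (if \<sigma> i \<le> ?t \<and> ?t < out_end ?V 0 ?par wt \<sigma> i then ?f i else 0)
          + (if \<sigma> i \<le> ?t \<and> ?t < \<sigma> i + wt i then wt i else 0)"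
      have g1: "?g i = 1" if "i \<in> ?A" for i
      proof -
        have iL: "i \<in> L" "j i = q" using that by auto
        have "\<sigma> i + 1 \<le> ?C" using Cmax_ge[of i \<sigma>] iL LV by (auto simp: wt_def L_def)
        then have "\<lfloor>?C - 1 - \<sigma> i\<rfloor> \<ge> 0" by simp
        then have "real_of_int \<lfloor>?C - 1 - \<sigma> i\<rfloor> = real q" using iL(2) unfolding j_def by linarith
        then have "\<sigma> i \<le> ?t \<and> ?t < \<sigma> i + 1" by linarith
        then show ?thesis using iL(1) by (auto simp: wt_def L_def)
      qed
      have gnn: "?g i \<ge> 0" for i by (auto simp: wt_def)
      have "real (card ?A) = (\<Sum>i\<in>?A. ?g i)" using g1 by simp
      also have "\<dots> \<le> (\<Sum>i\<in>?V. ?g i)" by (rule sum_mono2) (use LV gnn in auto)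
      also have "\<dots> = mem_at ?V 0 ?par wt wt ?f \<sigma> ?t" unfolding mem_at_def ..
      also have "\<dots> \<le> ?P" by (rule peak_ge)
      finally show ?thesis .
    qed
    have "real p = real (card L)" unfolding L_def by simp
    also have "\<dots> = (\<Sum>i\<in>L. 1)" by simp
    also have "\<dots> = (\<Sum>q\<in>{..<N}. \<Sum>i\<in>{i\<in>L. j i = q}. 1)"
      by (rule sum.group[symmetric]) (use Lfin jN in auto)
    also have "\<dots> = (\<Sum>q\<in>{..<N}. real (card {i\<in>L. j i = q}))" by simp
    also have "\<dots> \<le> (\<Sum>q\<in>{..<N}. ?P)" by (rule sum_mono) (use A in auto)
    also have "\<dots> = real N * ?P" by simp
    also have "\<dots> \<le> ?C * ?P" by (rule mult_right_mono[OF NC Pnn])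
    finally show ?thesis .
  qed
  have d1: "?C \<le> ?C / Cstar ?V 0 ?par wt p" using Cs Cnn by (simp add: le_divide_eq mult_left_le)
  have d2: "?P \<le> ?P / Mstar ?V 0 ?par wt wt ?f p" using Ms Pnn by (simp add: le_divide_eq mult_left_le)
  have "?C * ?P \<le> (?C / Cstar ?V 0 ?par wt p) * (?P / Mstar ?V 0 ?par wt wt ?f p)"
    by (rule mult_mono[OF d1 d2]) (use Cnn Pnn Cs in auto)
  then show "(?C / Cstar ?V 0 ?par wt p) * (?P / Mstar ?V 0 ?par wt wt ?f p) \<ge> real p"
    using grid by linarith
qed


theorem lemma2:
  shows "(\<forall>p::nat. p \<ge> 2 \<longrightarrow>
           (\<exists>V r par w nf f. in_tree V r par w nf f \<and>
              (\<forall>proc \<sigma>. valid_sched V r par w p proc \<sigma> \<longrightarrow>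
                 (Cmax V w \<sigma> / Cstar V r par w p) *
                 (peak_mem V r par w nf f \<sigma> / Mstar V r par w nf f p) \<ge> real p)))
       \<and>
       (\<forall>V r par w nf f (p::nat). in_tree V r par w nf f \<and> p \<ge> 1 \<longrightarrow>
           (\<exists>proc \<sigma>. valid_sched V r par w 1 proc \<sigma> \<and> no_idle V w \<sigma> \<and>
                peak_mem V r par w nf f \<sigma> = Mstar V r par w nf f 1) \<and>
           (\<forall>proc \<sigma>. valid_sched V r par w 1 proc \<sigma> \<and> no_idle V w \<sigma> \<and>
                peak_mem V r par w nf f \<sigma> = Mstar V r par w nf f 1 \<longrightarrow>
                peak_mem V r par w nf f \<sigma> = Mstar V r par w nf f p \<and>
                Cmax V w \<sigma> \<le> real p * Cstar V r par w p))"
proof (rule conjI)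
  show "\<forall>p::nat. p \<ge> 2 \<longrightarrow>
           (\<exists>V r par w nf f. in_tree V r par w nf f \<and>
              (\<forall>proc \<sigma>. valid_sched V r par w p proc \<sigma> \<longrightarrow>
                 (Cmax V w \<sigma> / Cstar V r par w p) *
                 (peak_mem V r par w nf f \<sigma> / Mstar V r par w nf f p) \<ge> real p))"
    using part1 by blast
next
  show "\<forall>V r par w nf f (p::nat). in_tree V r par w nf f \<and> p \<ge> 1 \<longrightarrow>
           (\<exists>proc \<sigma>. valid_sched V r par w 1 proc \<sigma> \<and> no_idle V w \<sigma> \<and>
                peak_mem V r par w nf f \<sigma> = Mstar V r par w nf f 1) \<and>
           (\<forall>proc \<sigma>. valid_sched V r par w 1 proc \<sigma> \<and> no_idle V w \<sigma> \<and>
                peak_mem V r par w nf f \<sigma> = Mstar V r par w nf f 1 \<longrightarrow>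
                peak_mem V r par w nf f \<sigma> = Mstar V r par w nf f p \<and>
                Cmax V w \<sigma> \<le> real p * Cstar V r par w p)"
  proof (intro allI impI)
    fix V r par w nf f and p :: nat
    assume a: "in_tree V r par w nf f \<and> p \<ge> 1"
    interpret tr V r par w nf f by unfold_locales (use a in simp)
    show "(\<exists>proc \<sigma>. valid_sched V r par w 1 proc \<sigma> \<and> no_idle V w \<sigma> \<and>
                peak_mem V r par w nf f \<sigma> = Mstar V r par w nf f 1) \<and>
           (\<forall>proc \<sigma>. valid_sched V r par w 1 proc \<sigma> \<and> no_idle V w \<sigma> \<and>
                peak_mem V r par w nf f \<sigma> = Mstar V r par w nf f 1 \<longrightarrow>
                peak_mem V r par w nf f \<sigma> = Mstar V r par w nf f p \<and>
                Cmax V w \<sigma> \<le> real p * Cstar V r par w p)"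
      using part2 a by blast
  qed
qed

end
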